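(* Let $A$ be a group and $\phi$ a surjective, proper virtual endomorphism of $A$. Let $\Gamma\le\mathrm{Aut}(A)$ be such that $\phi$ and $\Gamma$ are mutually stable. Then the action of $A\rtimes\Gamma$ on $\mathcal{T}_\phi$ is self-similar.
   Context: A virtual endomorphism of a group $A$ is a homomorphism $\phi$ from a finite index subgroup of $A$ to $A$; write $\phi^{-n}(A)$ for the iterated preimages ($\phi^{-0}(A)=A$). $\phi$ is proper if $\bigcap_{n}\phi^{-n}(A)=\{1\}$; a proper virtual endomorphism is injective, so a surjective proper one is a bijection from $\phi^{-1}(A)$ onto $A$. For $\Gamma\le\mathrm{Aut}(A)$, $\phi$ is $\Gamma$-stable if $\gamma(\phi^{-n}(A))=\phi^{-n}(A)$ for all $\gamma\in\Gamma$, $n\in\mathbb{N}$. For bijective $\phi$, $\phi$ and $\Gamma$ are mutually stable if $\phi$ is $\Gamma$-stable and, for each $\gamma\in\Gamma$, the automorphism $\phi\circ\gamma|_{\phi^{-1}(A)}\circ\phi^{-1}$ of $A$ lies in $\Gamma$. The tree of cosets $\mathcal{T}_\phi$ has vertex set $\coprod_{n\ge0}A/\phi^{-n}(A)$ with edges from $a\phi^{-n}(A)$ to $a\phi^{-(n+1)}(A)$; $A\rtimes\Gamma$ acts on it by $(a,\gamma).(a'\phi^{-n}(A))=a\gamma(a')\phi^{-n}(A)$. When $\phi$ is surjective, $\mathcal{T}_\phi$ is isomorphic to the rooted $d$-regular tree $\mathcal{T}_d$ with $d=[A:\phi^{-1}(A)]$. Self-similarity of the action means: writing $B=\phi^{-1}(A)$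 and choosing a transversal $T$ of $A/B$, identify for each $t\in T$ the subtree of $\mathcal{T}_\phi$ rooted at $tB$ (all cosets contained in $tB$) with $\mathcal{T}_\phi$ via $\delta_{tB}: a\phi^{-(n+1)}(A)\mapsto \phi(t^{-1}a)\phi^{-n}(A)$; then for every $g\in A\rtimes\Gamma$ and every $t\in T$, if $g$ sends $tB$ to $t'B$ ($t'\in T$), the tree automorphism $\delta_{t'B}\circ g\circ\delta_{tB}^{-1}$ of $\mathcal{T}_\phi$ is the action of some element of $A\rtimes\Gamma$. (Equivalently, the induced action of $A\rtimes \Gamma$ on $\mathcal{T}_d$ under the corresponding identification has image a self-similar subgroup of $\mathrm{Aut}(\mathcal{T}_d)$, i.e. one closed under taking level-1 states.) *)

theory Defs
  imports "HOL-Algebra.Algebra"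
begin

primrec vpre :: "('a, 'b) monoid_scheme \<Rightarrow> 'a set \<Rightarrow> ('a \<Rightarrow> 'a) \<Rightarrow> nat \<Rightarrow> 'a set" where
  "vpre G B phi 0 = carrier G"
| "vpre G B phi (Suc n) = {x \<in> B. phi x \<in> vpre G B phi n}"

definition virtual_endo :: "('a, 'b) monoid_scheme \<Rightarrow> 'a set \<Rightarrow> ('a \<Rightarrow> 'a) \<Rightarrow> bool" where
  "virtual_endo G B phi \<longleftrightarrow> subgroup B G \<and> finite {a <#\<^bsub>G\<^esub> B | a. a \<in> carrier G}
     \<and> phi \<in> hom (G\<lparr>carrier := B\<rparr>) G"

definition proper_ve :: "('a, 'b) monoid_scheme \<Rightarrow> 'a set \<Rightarrow> ('a \<Rightarrow> 'a) \<Rightarrow> bool" where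
  "proper_ve G B phi \<longleftrightarrow> (\<Inter>n. vpre G B phi n) = {\<one>\<^bsub>G\<^esub>}"

definition stable_ve :: "('a, 'b) monoid_scheme \<Rightarrow> 'a set \<Rightarrow> ('a \<Rightarrow> 'a) \<Rightarrow> ('a \<Rightarrow> 'a) set \<Rightarrow> bool" where
  "stable_ve G B phi \<Gamma> \<longleftrightarrow> (\<forall>\<gamma>\<in>\<Gamma>. \<forall>n. \<gamma> ` vpre G B phi n = vpre G B phi n)"

text \<open>Mutual stability (for bijective phi : B -> carrier G).\<close>
definition mutually_stable :: "('a, 'b) monoid_scheme \<Rightarrow> 'a set \<Rightarrow> ('a \<Rightarrow> 'a) \<Rightarrow> ('a \<Rightarrow> 'a) set \<Rightarrow> bool" where
  "mutually_stable G B phi \<Gamma> \<longleftrightarrow> stable_ve G B phi \<Gamma> \<and>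
     (\<forall>\<gamma>\<in>\<Gamma>. (\<lambda>a\<in>carrier G. phi (\<gamma> (the_inv_into B phi a))) \<in> \<Gamma>)"

definition coset_tree :: "('a, 'b) monoid_scheme \<Rightarrow> 'a set \<Rightarrow> ('a \<Rightarrow> 'a) \<Rightarrow> (nat \<times> 'a set) set" where
  "coset_tree G B phi = {(n, C) | n C. \<exists>a\<in>carrier G. C = a <#\<^bsub>G\<^esub> vpre G B phi n}"

definition tree_act :: "('a, 'b) monoid_scheme \<Rightarrow> 'a set \<Rightarrow> ('a \<Rightarrow> 'a) \<Rightarrow> 'a \<times> ('a \<Rightarrow> 'a)
    \<Rightarrow> nat \<times> 'a set \<Rightarrow> nat \<times> 'a set" where
  "tree_act G B phi g v = (fst v,
     (fst g \<otimes>\<^bsub>G\<^esub> snd g (SOME a'. a' \<in> snd v)) <#\<^bsub>G\<^esub> vpre G B phi (fst v))"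

definition subtree_at :: "('a, 'b) monoid_scheme \<Rightarrow> 'a set \<Rightarrow> ('a \<Rightarrow> 'a) \<Rightarrow> 'a \<Rightarrow> (nat \<times> 'a set) set" where
  "subtree_at G B phi t = {(Suc n, C) | n C. (Suc n, C) \<in> coset_tree G B phi \<and>
      C \<subseteq> t <#\<^bsub>G\<^esub> vpre G B phi 1}"

definition delta :: "('a, 'b) monoid_scheme \<Rightarrow> 'a set \<Rightarrow> ('a \<Rightarrow> 'a) \<Rightarrow> 'a \<Rightarrow> nat \<times> 'a set \<Rightarrow> nat \<times> 'a set" where
  "delta G B phi t v = (fst v - 1,
     phi (inv\<^bsub>G\<^esub> t \<otimes>\<^bsub>G\<^esub> (SOME a. a \<in> snd v)) <#\<^bsub>G\<^esub> vpre G B phi (fst v - 1))"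

definition transversal :: "('a, 'b) monoid_scheme \<Rightarrow> 'a set \<Rightarrow> 'a set \<Rightarrow> bool" where
  "transversal G B T \<longleftrightarrow> T \<subseteq> carrier G \<and>
     (\<forall>a\<in>carrier G. \<exists>!t. t \<in> T \<and> t \<in> a <#\<^bsub>G\<^esub> B)"

definition self_similar_action :: "('a, 'b) monoid_scheme \<Rightarrow> 'a set \<Rightarrow> ('a \<Rightarrow> 'a) \<Rightarrow> ('a \<Rightarrow> 'a) set \<Rightarrow> bool" where
  "self_similar_action G B phi \<Gamma> \<longleftrightarrow>
    (\<forall>T. transversal G (vpre G B phi 1) T \<longrightarrow>
      (\<forall>a\<in>carrier G. \<forall>\<gamma>\<in>\<Gamma>. \<forall>t\<in>T. \<forall>t'\<in>T.
         tree_act G B phi (a, \<gamma>) (1, t <#\<^bsub>G\<^esub> vpre G B phi 1) = (1, t' <#\<^bsub>G\<^esub> vpre G B phi 1) \<longrightarrow>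
         (\<exists>a''\<in>carrier G. \<exists>\<gamma>''\<in>\<Gamma>. \<forall>v\<in>coset_tree G B phi.
            delta G B phi t' (tree_act G B phi (a, \<gamma>)
               (the_inv_into (subtree_at G B phi t) (delta G B phi t) v))
            = tree_act G B phi (a'', \<gamma>'') v)))"

end

theory Submission
  imports Defs
begin

lemma (in group) lcos_mem_iff:
  assumes "subgroup H G" "x \<in> carrier G"
  shows "y \<in> x <#\<^bsub>G\<^esub> H \<longleftrightarrow> y \<in> carrier G \<and> inv x \<otimes> y \<in> H"
proof
  assume "y \<in> x <#\<^bsub>G\<^esub> H"
  then obtain h where h: "h \<in> H" "y = x \<otimes> h" unfolding l_coset_def by blast
  have hc: "h \<in> carrier G" using h assms subgroup.mem_carrier by metis
  show "y \<in> carrier G \<and> inv x \<otimes> y \<in> H"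
    using h hc assms by (simp add: m_assoc[symmetric])
next
  assume "y \<in> carrier G \<and> inv x \<otimes> y \<in> H"
  then show "y \<in> x <#\<^bsub>G\<^esub> H" using subgroup.lcos_module_rev[OF assms(1)] assms is_group by blast
qed

lemma (in group) self_in_lcos:
  assumes "subgroup H G" "x \<in> carrier G"
  shows "x \<in> x <#\<^bsub>G\<^esub> H"
  using assms lcos_mem_iff subgroup.one_closed by fastforce

lemma (in group) some_in_lcos:
  assumes "subgroup H G" "x \<in> carrier G"
  shows "(SOME y. y \<in> x <#\<^bsub>G\<^esub> H) \<in> x <#\<^bsub>G\<^esub> H"
  using self_in_lcos[OF assms] by (rule someI)

lemma (in group) lcos_eq_iff:
  assumes "subgroup H G" "x \<in> carrier G" "y \<in> carrier G"
  shows "x <#\<^bsub>G\<^esub> H = y <#\<^bsub>G\<^esub> H \<longleftrightarrow> inv x \<otimes> y \<in> H"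
proof
  assume "x <#\<^bsub>G\<^esub> H = y <#\<^bsub>G\<^esub> H"
  then have "y \<in> x <#\<^bsub>G\<^esub> H" using self_in_lcos assms by blast
  then show "inv x \<otimes> y \<in> H" using lcos_mem_iff assms by blast
next
  assume "inv x \<otimes> y \<in> H"
  then have "y \<in> x <#\<^bsub>G\<^esub> H" using lcos_mem_iff assms by blast
  then show "x <#\<^bsub>G\<^esub> H = y <#\<^bsub>G\<^esub> H" using l_repr_independence assms by blast
qed

lemma (in group) lcos_absorb:
  assumes "subgroup H G" "x \<in> carrier G" "h \<in> H"
  shows "(x \<otimes> h) <#\<^bsub>G\<^esub> H = x <#\<^bsub>G\<^esub> H"
proof -
  have hc: "h \<in> carrier G" using assms subgroup.mem_carrier by metis
  have "x <#\<^bsub>G\<^esub> H = (x \<otimes> h) <#\<^bsub>G\<^esub> H"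
    using lcos_eq_iff[OF assms(1,2)] assms hc by (simp add: m_assoc[symmetric])
  then show ?thesis by simp
qed

lemma (in group) cancel_l1[simp]: "x \<in> carrier G \<Longrightarrow> y \<in> carrier G \<Longrightarrow> x \<otimes> (inv x \<otimes> y) = y"
  by (simp add: m_assoc[symmetric])

lemma (in group) cancel_l2[simp]: "x \<in> carrier G \<Longrightarrow> y \<in> carrier G \<Longrightarrow> inv x \<otimes> (x \<otimes> y) = y"
  by (simp add: m_assoc[symmetric])

locale LP = group A for A (structure) +
  fixes B phi \<Gamma>
  assumes ve: "virtual_endo A B phi"
    and surj: "phi ` B = carrier A"
    and prp: "proper_ve A B phi"
    and sg: "subgroup \<Gamma> (AutoGroup A)"
    and ms: "mutually_stable A B phi \<Gamma>"
begin

abbreviation V where "V n \<equiv> vpre A B phi n"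

lemma B_sub: "subgroup B A" using ve unfolding virtual_endo_def by blast

lemma Bc: "x \<in> B \<Longrightarrow> x \<in> carrier A" using B_sub subgroup.mem_carrier by metis

lemma phi_car: "x \<in> B \<Longrightarrow> phi x \<in> carrier A"
  using ve unfolding virtual_endo_def hom_def by auto

lemma phi_mult: "x \<in> B \<Longrightarrow> y \<in> B \<Longrightarrow> phi (x \<otimes> y) = phi x \<otimes> phi y"
  using ve unfolding virtual_endo_def hom_def by auto

lemma phi_one: "phi \<one> = \<one>"
proof -
  have o: "\<one> \<in> B" using B_sub subgroup.one_closed by metis
  have "phi \<one> \<otimes> phi \<one> = phi \<one> \<otimes> \<one>" using phi_mult[OF o o] phi_car[OF o] by simp
  then show ?thesis using phi_car[OF o] l_cancel by blast
qed

lemma phi_inv: "x \<in> B \<Longrightarrow> phi (inv x) = inv (phi x)"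
proof -
  assume x: "x \<in> B"
  have ix: "inv x \<in> B" using x B_sub subgroup.m_inv_closed by metis
  have "phi (inv x) \<otimes> phi x = \<one>" using phi_mult[OF ix x, symmetric] x Bc phi_one by simp
  then show ?thesis using inv_equality phi_car x ix by metis
qed

lemma V1: "V 1 = B" using phi_car by auto

lemma V_B: "V (Suc n) \<subseteq> B" by auto

lemma phi_V: "x \<in> V (Suc n) \<Longrightarrow> phi x \<in> V n" by auto

lemma V_sub: "subgroup (V n) A"
proof (induction n)
  case 0
  then show ?case by (simp add: subgroup_self)
next
  case (Suc n)
  show ?case
  proof (rule subgroupI)
    show "V (Suc n) \<subseteq> carrier A" using Bc by auto
    have o: "\<one> \<in> B" using B_sub subgroup.one_closed by metis
    have "phi \<one> \<in> V n" using phi_one subgroup.one_closed[OF Suc.IH] by simp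
    then show "V (Suc n) \<noteq> {}" using o by auto
    fix a assume "a \<in> V (Suc n)"
    then have a: "a \<in> B" "phi a \<in> V n" by auto
    have "inv a \<in> B" using a subgroup.m_inv_closed[OF B_sub] by blast
    moreover have "phi (inv a) \<in> V n" using a phi_inv subgroup.m_inv_closed[OF Suc.IH] by simp
    ultimately show "inv a \<in> V (Suc n)" by simp
  next
    fix a b assume "a \<in> V (Suc n)" "b \<in> V (Suc n)"
    then have a: "a \<in> B" "phi a \<in> V n" "b \<in> B" "phi b \<in> V n" by auto
    have "a \<otimes> b \<in> B" using a subgroup.m_closed[OF B_sub] by blast
    moreover have "phi (a \<otimes> b) \<in> V n" using a phi_mult subgroup.m_closed[OF Suc.IH] by simp
    ultimately show "a \<otimes> b \<in> V (Suc n)" by simp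
  qed
qed

declare vpre.simps(2)[simp del]

lemma V_Suc_iff[simp]: "x \<in> V (Suc n) \<longleftrightarrow> x \<in> B \<and> phi x \<in> V n"
  by (simp add: vpre.simps(2))

lemma Vc: "x \<in> V n \<Longrightarrow> x \<in> carrier A" using V_sub subgroup.mem_carrier by metis

lemma phi_inj: "inj_on phi B"
proof (rule inj_onI)
  fix x y assume x: "x \<in> B" and y: "y \<in> B" and e: "phi x = phi y"
  define z where "z = inv x \<otimes> y"
  have zB: "z \<in> B" using x y B_sub z_def subgroup.m_closed subgroup.m_inv_closed by metis
  have "phi z = \<one>" using z_def phi_mult phi_inv x y e zB B_sub subgroup.m_inv_closed phi_car
    by (metis l_inv)
  then have "z \<in> V n" for n using zB by (cases n) (auto intro: Bc subgroup.one_closed[OF V_sub])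
  then have "z = \<one>" using prp unfolding proper_ve_def by blast
  then have "y = x \<otimes> \<one>" using z_def x y Bc inv_solve_left'[of "\<one>" x y] by simp
  then show "x = y" using x Bc by simp
qed


lemma gam_hom_mem: "\<gamma> \<in> \<Gamma> \<Longrightarrow> \<gamma> \<in> hom A A"
proof -
  assume g: "\<gamma> \<in> \<Gamma>"
  have "\<Gamma> \<subseteq> carrier (AutoGroup A)" using sg by (rule subgroup.subset)
  then have "\<gamma> \<in> auto A" using g by (simp add: AutoGroup_def subset_iff)
  then show "\<gamma> \<in> hom A A" unfolding auto_def by blast
qed

lemma gam_mult: "\<gamma> \<in> \<Gamma> \<Longrightarrow> x \<in> carrier A \<Longrightarrow> y \<in> carrier A \<Longrightarrow> \<gamma> (x \<otimes> y) = \<gamma> x \<otimes> \<gamma> y"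
  using gam_hom_mem[of \<gamma>] hom_mult[of \<gamma> A A x y] by simp

lemma gam_car: "\<gamma> \<in> \<Gamma> \<Longrightarrow> x \<in> carrier A \<Longrightarrow> \<gamma> x \<in> carrier A"
  using gam_hom_mem[of \<gamma>] hom_in_carrier[of \<gamma> A A x] by simp

lemma gam_V: "\<gamma> \<in> \<Gamma> \<Longrightarrow> x \<in> V n \<Longrightarrow> \<gamma> x \<in> V n"
  using ms unfolding mutually_stable_def stable_ve_def by blast

lemma tree_act_eq:
  assumes a: "a \<in> carrier A" and g: "\<gamma> \<in> \<Gamma>" and x: "x \<in> carrier A"
  shows "tree_act A B phi (a, \<gamma>) (n, x <#\<^bsub>A\<^esub> V n) = (n, (a \<otimes> \<gamma> x) <#\<^bsub>A\<^esub> V n)"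
proof -
  define c where "c = (SOME y. y \<in> x <#\<^bsub>A\<^esub> V n)"
  have c: "c \<in> x <#\<^bsub>A\<^esub> V n" unfolding c_def using some_in_lcos[OF V_sub x] .
  then have cc: "c \<in> carrier A" and y: "inv x \<otimes> c \<in> V n" using lcos_mem_iff[OF V_sub x] by auto
  define y where "y = inv x \<otimes> c"
  have yc: "y \<in> carrier A" using y y_def Vc by blast
  have "c = x \<otimes> y" using inv_solve_left[of y x c] y_def x cc yc by simp
  then have "a \<otimes> \<gamma> c = (a \<otimes> \<gamma> x) \<otimes> \<gamma> y" using gam_mult[OF g x yc] a gam_car[OF g] x yc
    by (simp add: m_assoc)
  moreover have "\<gamma> y \<in> V n" using gam_V[OF g] y y_def by blast
  ultimately have "(a \<otimes> \<gamma> c) <#\<^bsub>A\<^esub> V n = (a \<otimes> \<gamma> x) <#\<^bsub>A\<^esub> V n"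
    using lcos_absorb[OF V_sub] a gam_car[OF g x] by simp
  then show ?thesis unfolding tree_act_def c_def by simp
qed

lemma delta_eq:
  assumes t: "t \<in> carrier A" and x: "x \<in> carrier A" and tx: "inv t \<otimes> x \<in> B"
  shows "delta A B phi t (Suc n, x <#\<^bsub>A\<^esub> V (Suc n)) = (n, phi (inv t \<otimes> x) <#\<^bsub>A\<^esub> V n)"
proof -
  define c where "c = (SOME y. y \<in> x <#\<^bsub>A\<^esub> V (Suc n))"
  have c: "c \<in> x <#\<^bsub>A\<^esub> V (Suc n)" unfolding c_def using some_in_lcos[OF V_sub x] .
  then have cc: "c \<in> carrier A" and y: "inv x \<otimes> c \<in> V (Suc n)" using lcos_mem_iff[OF V_sub x] by auto
  define y where "y = inv x \<otimes> c"
  have yB: "y \<in> B" using y y_def V_B by blast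
  have yc: "y \<in> carrier A" using yB Bc by blast
  have "c = x \<otimes> y" using inv_solve_left[of y x c] y_def x cc yc by simp
  then have "inv t \<otimes> c = (inv t \<otimes> x) \<otimes> y" using t x yc by (simp add: m_assoc)
  then have "phi (inv t \<otimes> c) = phi (inv t \<otimes> x) \<otimes> phi y" using phi_mult tx yB by simp
  moreover have "phi y \<in> V n" using y y_def by simp
  ultimately have "phi (inv t \<otimes> c) <#\<^bsub>A\<^esub> V n = phi (inv t \<otimes> x) <#\<^bsub>A\<^esub> V n"
    using lcos_absorb[OF V_sub] phi_car[OF tx] by simp
  then show ?thesis unfolding delta_def c_def by simp
qed

lemma subtree_elem:
  assumes t: "t \<in> carrier A" and w: "w \<in> subtree_at A B phi t"
  obtains n x where "w = (Suc n, x <#\<^bsub>A\<^esub> V (Suc n))" "x \<in> carrier A" "inv t \<otimes> x \<in> B"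
proof -
  obtain n C where w1: "w = (Suc n, C)" "(Suc n, C) \<in> coset_tree A B phi" "C \<subseteq> t <#\<^bsub>A\<^esub> V 1"
    using w unfolding subtree_at_def by blast
  then obtain x where x: "x \<in> carrier A" "C = x <#\<^bsub>A\<^esub> V (Suc n)"
    unfolding coset_tree_def by blast
  have "x \<in> C" using x self_in_lcos[OF V_sub] by blast
  then have "x \<in> t <#\<^bsub>A\<^esub> B" using w1 V1 by auto
  then have "inv t \<otimes> x \<in> B" using lcos_mem_iff[OF B_sub t] by blast
  then show ?thesis using that w1 x by blast
qed

lemma delta_inj:
  assumes t: "t \<in> carrier A"
  shows "inj_on (delta A B phi t) (subtree_at A B phi t)"
proof (rule inj_onI)
  fix w1 w2 assume w1: "w1 \<in> subtree_at A B phi t" and w2: "w2 \<in> subtree_at A B phi t"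
    and e: "delta A B phi t w1 = delta A B phi t w2"
  obtain n x where n: "w1 = (Suc n, x <#\<^bsub>A\<^esub> V (Suc n))" "x \<in> carrier A" "inv t \<otimes> x \<in> B"
    using subtree_elem[OF t w1] by blast
  obtain m y where m: "w2 = (Suc m, y <#\<^bsub>A\<^esub> V (Suc m))" "y \<in> carrier A" "inv t \<otimes> y \<in> B"
    using subtree_elem[OF t w2] by blast
  have d1: "delta A B phi t w1 = (n, phi (inv t \<otimes> x) <#\<^bsub>A\<^esub> V n)"
    using n(1) delta_eq[OF t n(2,3)] by simp
  have d2: "delta A B phi t w2 = (m, phi (inv t \<otimes> y) <#\<^bsub>A\<^esub> V m)"
    using m(1) delta_eq[OF t m(2,3)] by simp
  have "(n, phi (inv t \<otimes> x) <#\<^bsub>A\<^esub> V n) = (m, phi (inv t \<otimes> y) <#\<^bsub>A\<^esub> V m)"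
    using e by (simp only: d1 d2)
  then have cj: "n = m \<and> phi (inv t \<otimes> x) <#\<^bsub>A\<^esub> V n = phi (inv t \<otimes> y) <#\<^bsub>A\<^esub> V m"
    by (rule prod.inject[THEN iffD1])
  then have nm: "m = n" by simp
  have ee: "phi (inv t \<otimes> x) <#\<^bsub>A\<^esub> V n = phi (inv t \<otimes> y) <#\<^bsub>A\<^esub> V n"
    using cj nm by blast
  define p where "p = inv t \<otimes> x"
  define q where "q = inv t \<otimes> y"
  have pB: "p \<in> B" and qB: "q \<in> B" using p_def q_def n m by auto
  have ipB: "inv p \<in> B" using pB subgroup.m_inv_closed[OF B_sub] by blast
  have "inv (phi p) \<otimes> phi q \<in> V n"
    using ee lcos_eq_iff[OF V_sub phi_car[OF pB] phi_car[OF qB]] p_def q_def by simp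
  then have "phi (inv p \<otimes> q) \<in> V n" using phi_mult[OF ipB qB] phi_inv[OF pB] by simp
  moreover have "inv p \<otimes> q \<in> B" using ipB qB subgroup.m_closed[OF B_sub] by blast
  ultimately have iv: "inv p \<otimes> q \<in> V (Suc n)" by simp
  have tt: "t \<otimes> (inv t \<otimes> y) = y" using t m(2) by (simp add: m_assoc[symmetric])
  have "inv p \<otimes> q = inv x \<otimes> y" unfolding p_def q_def using t n m tt
    by (simp add: inv_mult_group m_assoc)
  then have "x <#\<^bsub>A\<^esub> V (Suc n) = y <#\<^bsub>A\<^esub> V (Suc n)"
    using iv lcos_eq_iff[OF V_sub n(2) m(2)] by simp
  then show "w1 = w2" using n m nm by simp
qed

lemma main: "self_similar_action A B phi \<Gamma>"
  unfolding self_similar_action_def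
proof (intro allI impI ballI)
  fix T a \<gamma> t t'
  assume T: "transversal A (V 1) T" and a: "a \<in> carrier A" and g: "\<gamma> \<in> \<Gamma>"
    and tT: "t \<in> T" and t'T: "t' \<in> T"
    and act: "tree_act A B phi (a, \<gamma>) (1, t <#\<^bsub>A\<^esub> V 1) = (1, t' <#\<^bsub>A\<^esub> V 1)"
  have Tc: "T \<subseteq> carrier A" using T unfolding transversal_def by (rule conjunct1)
  have t: "t \<in> carrier A" and t': "t' \<in> carrier A" using Tc tT t'T by auto
  have gt: "\<gamma> t \<in> carrier A" using gam_car[OF g t] .
  have at: "a \<otimes> \<gamma> t \<in> carrier A" using a gt by simp
  have "tree_act A B phi (a, \<gamma>) (1, t <#\<^bsub>A\<^esub> V 1) = (1, (a \<otimes> \<gamma> t) <#\<^bsub>A\<^esub> V 1)"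
    by (rule tree_act_eq[OF a g t])
  with act have e: "t' <#\<^bsub>A\<^esub> B = (a \<otimes> \<gamma> t) <#\<^bsub>A\<^esub> B" using V1 by simp
  define k where "k = inv t' \<otimes> (a \<otimes> \<gamma> t)"
  have kB: "k \<in> B" using e lcos_eq_iff[OF B_sub t' at] k_def by simp
  have kc: "k \<in> carrier A" using kB Bc by blast
  define \<gamma>2 where "\<gamma>2 = (\<lambda>x\<in>carrier A. phi (\<gamma> (the_inv_into B phi x)))"
  have msa: "\<forall>\<gamma>\<in>\<Gamma>. (\<lambda>a\<in>carrier A. phi (\<gamma> (the_inv_into B phi a))) \<in> \<Gamma>"
    using ms unfolding mutually_stable_def by (rule conjunct2)
  have g2: "\<gamma>2 \<in> \<Gamma>" unfolding \<gamma>2_def using msa g by (rule bspec)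
  have pk: "phi k \<in> carrier A" using phi_car[OF kB] .
  have main: "\<forall>v\<in>coset_tree A B phi. delta A B phi t' (tree_act A B phi (a, \<gamma>)
               (the_inv_into (subtree_at A B phi t) (delta A B phi t) v))
            = tree_act A B phi (phi k, \<gamma>2) v"
  proof
    fix v assume v: "v \<in> coset_tree A B phi"
    then obtain n d where vd: "v = (n, d <#\<^bsub>A\<^esub> V n)" "d \<in> carrier A"
      unfolding coset_tree_def by blast
    have "d \<in> phi ` B" using surj vd(2) by simp
    then obtain b where b: "b \<in> B" "phi b = d" by (auto elim: imageE)
    have bc: "b \<in> carrier A" using b Bc by blast
    define w where "w = (Suc n, (t \<otimes> b) <#\<^bsub>A\<^esub> V (Suc n))"
    have tb: "t \<otimes> b \<in> carrier A" using t bc by simp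
    have itb: "inv t \<otimes> (t \<otimes> b) = b" using t bc by simp
    have "(t \<otimes> b) <#\<^bsub>A\<^esub> V (Suc n) \<subseteq> t <#\<^bsub>A\<^esub> V 1"
    proof
      fix z assume "z \<in> (t \<otimes> b) <#\<^bsub>A\<^esub> V (Suc n)"
      then have zc: "z \<in> carrier A" and z: "inv (t \<otimes> b) \<otimes> z \<in> V (Suc n)"
        using lcos_mem_iff[OF V_sub tb] by auto
      have zB: "inv (t \<otimes> b) \<otimes> z \<in> B" using z by simp
      have "b \<otimes> (inv (t \<otimes> b) \<otimes> z) = inv t \<otimes> z" using t bc zc
        by (simp add: inv_mult_group m_assoc)
      moreover have "b \<otimes> (inv (t \<otimes> b) \<otimes> z) \<in> B" using b zB subgroup.m_closed[OF B_sub] by blast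
      ultimately have "inv t \<otimes> z \<in> B" by simp
      then show "z \<in> t <#\<^bsub>A\<^esub> V 1" using lcos_mem_iff[OF B_sub t] zc V1 by simp
    qed
    moreover have "(Suc n, (t \<otimes> b) <#\<^bsub>A\<^esub> V (Suc n)) \<in> coset_tree A B phi"
      unfolding coset_tree_def using tb by blast
    ultimately have wS: "w \<in> subtree_at A B phi t" unfolding subtree_at_def w_def by blast
    have dw: "delta A B phi t w = v" using delta_eq[OF t tb] itb b vd w_def by simp
    have inv: "the_inv_into (subtree_at A B phi t) (delta A B phi t) v = w"
      by (rule the_inv_into_f_eq[OF delta_inj[OF t] dw wS])
    have "b \<in> V 1" using b(1) V1 by blast
    then have "\<gamma> b \<in> V 1" by (rule gam_V[OF g])
    then have gb: "\<gamma> b \<in> B" using V1 by blast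
    have gbc: "\<gamma> b \<in> carrier A" using gb Bc by blast
    have gtb: "\<gamma> (t \<otimes> b) = \<gamma> t \<otimes> \<gamma> b" using gam_mult[OF g t bc] .
    have atb: "a \<otimes> \<gamma> (t \<otimes> b) \<in> carrier A" using a gam_car[OF g tb] by simp
    have ta: "tree_act A B phi (a, \<gamma>) w = (Suc n, (a \<otimes> \<gamma> (t \<otimes> b)) <#\<^bsub>A\<^esub> V (Suc n))"
      using tree_act_eq[OF a g tb] w_def by simp
    have eq1: "inv t' \<otimes> (a \<otimes> \<gamma> (t \<otimes> b)) = k \<otimes> \<gamma> b"
      unfolding k_def gtb using t' a gt gbc by (simp add: m_assoc)
    have kgB: "k \<otimes> \<gamma> b \<in> B" using kB gb subgroup.m_closed[OF B_sub] by blast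
    have "delta A B phi t' (Suc n, (a \<otimes> \<gamma> (t \<otimes> b)) <#\<^bsub>A\<^esub> V (Suc n))
        = (n, phi (k \<otimes> \<gamma> b) <#\<^bsub>A\<^esub> V n)"
      using delta_eq[OF t' atb] eq1 kgB by simp
    moreover have "phi (k \<otimes> \<gamma> b) = phi k \<otimes> \<gamma>2 d"
    proof -
      have "the_inv_into B phi d = b" using the_inv_into_f_f[OF phi_inj b(1)] b(2) by simp
      then have "\<gamma>2 d = phi (\<gamma> b)" unfolding \<gamma>2_def using vd(2) by simp
      then show ?thesis using phi_mult[OF kB gb] by simp
    qed
    moreover have "tree_act A B phi (phi k, \<gamma>2) v = (n, (phi k \<otimes> \<gamma>2 d) <#\<^bsub>A\<^esub> V n)"
      using tree_act_eq[OF pk g2 vd(2)] vd(1) by simp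
    ultimately show "delta A B phi t' (tree_act A B phi (a, \<gamma>)
               (the_inv_into (subtree_at A B phi t) (delta A B phi t) v))
            = tree_act A B phi (phi k, \<gamma>2) v"
      using inv ta by simp
  qed
  show "\<exists>a''\<in>carrier A. \<exists>\<gamma>''\<in>\<Gamma>. \<forall>v\<in>coset_tree A B phi.
            delta A B phi t' (tree_act A B phi (a, \<gamma>)
               (the_inv_into (subtree_at A B phi t) (delta A B phi t) v))
            = tree_act A B phi (a'', \<gamma>'') v"
    using pk g2 main by blast
qed
end

theorem lemma4p4:
  fixes A :: "('a, 'b) monoid_scheme" and B :: "'a set" and phi :: "'a \<Rightarrow> 'a"
    and \<Gamma> :: "('a \<Rightarrow> 'a) set"
  assumes "group A"
    and "virtual_endo A B phi"
    and "phi ` B = carrier A"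
    and "proper_ve A B phi"
    and "subgroup \<Gamma> (AutoGroup A)"
    and "mutually_stable A B phi \<Gamma>"
  shows "self_similar_action A B phi \<Gamma>"
proof -
  interpret LP A B phi \<Gamma>
    using assms by (simp add: LP_def LP_axioms_def)
  show ?thesis by (rule main)
qed

end
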